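(* If $f\in\mathcal G_0\setminus\{i\}$, then there exist $g_1,g_2\in\mathcal G_0$ such that $$\int_{-1}^1 f(g_1^{-1}(t))\,dt>0>\int_{-1}^1 f(g_2^{-1}(t))\,dt,$$ i.e. $Q(f,g_1)>0>Q(f,g_2)$, so $g_1\to f\to g_2$ in $\Gamma_{\mathcal G}$. If moreover $f\in\mathcal G_0\setminus\mathcal G_{00}$, then $g_1,g_2$ can be chosen in $\mathcal G_{00}$.
   Context: Let $\mathcal G$ be the group (under composition) of strictly increasing continuous maps $f:[-1,1]\to[-1,1]$ with $f(\pm1)=\pm1$; $i\in\mathcal G$ is the identity $i(t)=t$. Let $\mathcal G_0=\{f\in\mathcal G:\int_{-1}^1 f(t)\,dt=0\}$ and $\mathcal G_{00}=\{f\in\mathcal G: f(-t)=-f(t)\ \forall t\}$ (the odd elements; $\mathcal G_{00}\subset\mathcal G_0$). For $f,g\in\mathcal G$ put $Q(f,g)=\int_{-1}^1 f(g^{-1}(t))\,dt$. The digraph $\Gamma_{\mathcal G}$ on $\mathcal G$ has an edge $g\to f$ iff $Q(f,g)>0$. *)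

theory Defs
  imports "HOL-Analysis.Analysis"
begin

text \<open>Elements of the group G are represented by functions real \<Rightarrow> real; only their
  restriction to [-1,1] matters.\<close>

definition G :: "(real \<Rightarrow> real) set" where
  "G = {f. continuous_on {-1..1} f \<and> strict_mono_on {-1..1} f
          \<and> f ` {-1..1} \<subseteq> {-1..1} \<and> f (-1) = -1 \<and> f 1 = 1}"

definition G0 :: "(real \<Rightarrow> real) set" where
  "G0 = {f \<in> G. integral {-1..1} f = 0}"

definition G00 :: "(real \<Rightarrow> real) set" where
  "G00 = {f \<in> G. \<forall>t\<in>{-1..1}. f (-t) = - f t}"

definition Q :: "(real \<Rightarrow> real) \<Rightarrow> (real \<Rightarrow> real) \<Rightarrow> real" where
  "Q f g = integral {-1..1} (\<lambda>t. f (inv_into {-1..1} g t))"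

text \<open>Equality of group elements = equality on [-1,1].\<close>
definition is_id :: "(real \<Rightarrow> real) \<Rightarrow> bool" where
  "is_id f \<longleftrightarrow> (\<forall>t\<in>{-1..1}. f t = t)"

end

theory Submission
  imports Defs
begin

definition lin :: "real \<Rightarrow> real \<Rightarrow> real \<Rightarrow> real \<Rightarrow> real \<Rightarrow> real" where
  "lin x0 y0 x1 y1 x = y0 + (x - x0) * ((y1 - y0) / (x1 - x0))"

lemma lin_left[simp]: "lin x0 y0 x1 y1 x0 = y0" by (simp add: lin_def)
lemma lin_right[simp]: "x0 \<noteq> x1 \<Longrightarrow> lin x0 y0 x1 y1 x1 = y1" by (simp add: lin_def)

lemma lin_strict:
  assumes "x0 < x1" "y0 < y1" "x < x'"
  shows "lin x0 y0 x1 y1 x < lin x0 y0 x1 y1 x'"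
proof -
  have "(y1 - y0) / (x1 - x0) > 0" using assms by simp
  then have "(x - x0) * ((y1 - y0) / (x1 - x0)) < (x' - x0) * ((y1 - y0) / (x1 - x0))"
    using assms by (intro mult_strict_right_mono) auto
  then show ?thesis by (simp add: lin_def)
qed

lemma lin_mono:
  assumes "x0 < x1" "y0 < y1" "x \<le> x'"
  shows "lin x0 y0 x1 y1 x \<le> lin x0 y0 x1 y1 x'"
  using lin_strict[OF assms(1,2)] assms(3) by (cases "x = x'") (auto simp: order_le_less)

lemma lin_inv:
  assumes "x0 < x1" "y0 < y1"
  shows "lin y0 x0 y1 x1 (lin x0 y0 x1 y1 x) = x"
proof -
  have "(x - x0) * ((y1 - y0) / (x1 - x0)) * ((x1 - x0) / (y1 - y0)) = x - x0"
    using assms by simp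
  then show ?thesis by (simp add: lin_def)
qed

lemma lin_range:
  assumes "x0 < x1" "y0 < y1" "x0 \<le> x" "x \<le> x1"
  shows "y0 \<le> lin x0 y0 x1 y1 x" "lin x0 y0 x1 y1 x \<le> y1"
  using lin_mono[OF assms(1,2) assms(3)] lin_mono[OF assms(1,2) assms(4)] assms by auto

lemma lin_deriv:
  "(lin x0 y0 x1 y1 has_real_derivative ((y1 - y0) / (x1 - x0))) (at x within S)"
proof -
  have "((\<lambda>x. y0 + (x - x0) * c) has_real_derivative c) (at x within S)" for c
    by (auto intro!: derivative_eq_intros)
  then show ?thesis unfolding lin_def[abs_def] .
qed

lemma lin_has_integral:
  assumes "x0 < x1"
  shows "(lin x0 y0 x1 y1 has_integral (x1 - x0) * (y0 + y1) / 2) {x0..x1}"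
proof -
  define k where "k = (y1 - y0) / (x1 - x0)"
  define P where "P = (\<lambda>x. y0 * x + k * (x - x0)^2 / 2)"
  have d: "(P has_real_derivative y0 + k * (x - x0)) (at x within {x0..x1})" for x
    unfolding P_def by (auto intro!: derivative_eq_intros simp: field_simps)
  have "\<And>x. (P has_vector_derivative lin x0 y0 x1 y1 x) (at x within {x0..x1})"
    using d unfolding has_real_derivative_iff_has_vector_derivative[symmetric]
    by (simp add: lin_def k_def algebra_simps)
  then have H: "(lin x0 y0 x1 y1 has_integral (P x1 - P x0)) {x0..x1}"
    using assms by (intro fundamental_theorem_of_calculus) auto
  have kk: "k * (x1 - x0) = y1 - y0" using assms by (simp add: k_def)
  have "P x1 - P x0 = (x1 - x0) * y0 + (k * (x1 - x0)) * (x1 - x0) / 2"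
    by (simp add: P_def power2_eq_square algebra_simps)
  also have "\<dots> = (x1 - x0) * (y0 + y1) / 2" unfolding kk by (simp add: field_simps)
  finally have "P x1 - P x0 = (x1 - x0) * (y0 + y1) / 2" .
  then show ?thesis using H by metis
qed

definition FF :: "(real \<Rightarrow> real) \<Rightarrow> real \<Rightarrow> real" where
  "FF f u = integral {-1..u} f"

lemma lin_comp_has_integral:
  assumes f: "continuous_on {-1..1} f"
    and "x0 < x1" "y0 < y1" "-1 \<le> y0" "y1 \<le> 1"
  shows "((\<lambda>t. f (lin x0 y0 x1 y1 t)) has_integral ((x1 - x0) / (y1 - y0)) * (FF f y1 - FF f y0)) {x0..x1}"
proof -
  define k where "k = (y1 - y0) / (x1 - x0)"
  have kpos: "k > 0" using assms by (simp add: k_def)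
  have "\<And>t. t \<in> {x0..x1} \<Longrightarrow>
      ((\<lambda>t. FF f (lin x0 y0 x1 y1 t) / k) has_vector_derivative f (lin x0 y0 x1 y1 t)) (at t within {x0..x1})"
  proof -
    fix t assume t: "t \<in> {x0..x1}"
    let ?L = "lin x0 y0 x1 y1"
    have sub: "?L ` {x0..x1} \<subseteq> {-1..1}"
    proof
      fix y assume "y \<in> ?L ` {x0..x1}"
      then obtain s where s: "s \<in> {x0..x1}" "y = ?L s" by auto
      then show "y \<in> {-1..1}" using lin_range[OF assms(2,3), of s] assms by auto
    qed
    have Lt: "?L t \<in> {-1..1}" using sub t by blast
    have "(FF f has_real_derivative f (?L t)) (at (?L t) within {-1..1})"
      unfolding FF_def[abs_def] by (rule integral_has_real_derivative[OF f Lt])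
    then have "(FF f has_real_derivative f (?L t)) (at (?L t) within ?L ` {x0..x1})"
      using sub by (rule DERIV_subset)
    from DERIV_image_chain[OF this lin_deriv]
    have "((FF f \<circ> ?L) has_real_derivative f (?L t) * k) (at t within {x0..x1})"
      by (simp add: k_def)
    then have "((\<lambda>t. (FF f \<circ> ?L) t / k) has_real_derivative f (?L t) * k / k) (at t within {x0..x1})"
      by (rule DERIV_cdivide)
    then show "((\<lambda>t. FF f (?L t) / k) has_vector_derivative f (?L t)) (at t within {x0..x1})"
      using kpos by (simp add: has_real_derivative_iff_has_vector_derivative)
  qed
  then have "((\<lambda>t. f (lin x0 y0 x1 y1 t)) has_integral
      (FF f (lin x0 y0 x1 y1 x1) / k - FF f (lin x0 y0 x1 y1 x0) / k)) {x0..x1}"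
    using assms by (intro fundamental_theorem_of_calculus) auto
  moreover have "FF f (lin x0 y0 x1 y1 x1) / k - FF f (lin x0 y0 x1 y1 x0) / k
      = ((x1 - x0) / (y1 - y0)) * (FF f y1 - FF f y0)"
  proof -
    have "1 / k = (x1 - x0) / (y1 - y0)" by (simp add: k_def)
    moreover have "a / k - b / k = (1 / k) * (a - b)" for a b using kpos by (simp add: field_simps)
    ultimately show ?thesis using assms by simp
  qed
  ultimately show ?thesis by simp
qed


definition pl :: "real \<Rightarrow> real \<Rightarrow> real \<Rightarrow> real \<Rightarrow> real \<Rightarrow> real" where
  "pl a1 a2 b1 b2 x = (if x \<le> a1 then lin (-1) (-1) a1 b1 x
     else if x \<le> a2 then lin a1 b1 a2 b2 x else lin a2 b2 1 1 x)"

definition okp :: "real \<Rightarrow> real \<Rightarrow> real \<Rightarrow> real \<Rightarrow> bool" where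
  "okp a1 a2 b1 b2 \<longleftrightarrow> -1 < a1 \<and> a1 < a2 \<and> a2 < 1 \<and> -1 < b1 \<and> b1 < b2 \<and> b2 < 1"

lemma okp_swap: "okp a1 a2 b1 b2 \<Longrightarrow> okp b1 b2 a1 a2" by (auto simp: okp_def)

lemma pl_alt:
  assumes "okp a1 a2 b1 b2"
  shows "pl a1 a2 b1 b2 x = lin (-1) (-1) a1 b1 (min x a1)
     + (lin a1 b1 a2 b2 (max a1 (min x a2)) - b1) + (lin a2 b2 1 1 (max x a2) - b2)"
  using assms by (auto simp: pl_def okp_def min_def max_def)

lemma lin_cont: "continuous_on S (lin x0 y0 x1 y1)"
  unfolding lin_def[abs_def] by (intro continuous_intros)

lemma pl_cont:
  assumes "okp a1 a2 b1 b2"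
  shows "continuous_on S (pl a1 a2 b1 b2)"
proof -
  have "continuous_on S (\<lambda>x. lin (-1) (-1) a1 b1 (min x a1)
     + (lin a1 b1 a2 b2 (max a1 (min x a2)) - b1) + (lin a2 b2 1 1 (max x a2) - b2))"
    unfolding lin_def by (intro continuous_intros)
  then show ?thesis using pl_alt[OF assms] by (simp add: fun_eq_iff[symmetric])
qed

lemma pl_strict:
  assumes "okp a1 a2 b1 b2" "x < y"
  shows "pl a1 a2 b1 b2 x < pl a1 a2 b1 b2 y"
proof -
  have o: "-1 < a1" "a1 < a2" "a2 < 1" "-1 < b1" "b1 < b2" "b2 < 1" using assms by (auto simp: okp_def)
  note s1 = lin_strict[OF o(1) o(4)] and s2 = lin_strict[OF o(2) o(5)] and s3 = lin_strict[OF o(3) o(6)]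
  note m1 = lin_mono[OF o(1) o(4)] and m2 = lin_mono[OF o(2) o(5)] and m3 = lin_mono[OF o(3) o(6)]
  have e1: "lin (-1) (-1) a1 b1 a1 = b1" and e2: "lin a1 b1 a2 b2 a2 = b2" and e2': "lin a1 b1 a2 b2 a1 = b1"
    and e3: "lin a2 b2 1 1 a2 = b2" using o by auto
  show ?thesis
  proof (cases "y \<le> a1")
    case True then show ?thesis using assms s1 by (simp add: pl_def)
  next
    case y1: False
    show ?thesis
    proof (cases "y \<le> a2")
      case True
      have "b1 < lin a1 b1 a2 b2 y" using s2[of a1 y] y1 e2' by simp
      moreover have "x \<le> a1 \<Longrightarrow> lin (-1) (-1) a1 b1 x \<le> b1" using m1[of x a1] e1 by simp
      ultimately show ?thesis using True y1 assms s2 by (auto simp: pl_def)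
    next
      case y2: False
      have "b2 < lin a2 b2 1 1 y" using s3[of a2 y] y2 e3 by simp
      moreover have "x \<le> a1 \<Longrightarrow> lin (-1) (-1) a1 b1 x \<le> b1" using m1[of x a1] e1 by simp
      moreover have "x \<le> a2 \<Longrightarrow> lin a1 b1 a2 b2 x \<le> b2" using m2[of x a2] e2 by simp
      ultimately show ?thesis using y2 y1 assms s3 o by (auto simp: pl_def)
    qed
  qed
qed

lemma pl_m1[simp]: "okp a1 a2 b1 b2 \<Longrightarrow> pl a1 a2 b1 b2 (-1) = -1"
  by (auto simp: pl_def okp_def)
lemma pl_1[simp]: "okp a1 a2 b1 b2 \<Longrightarrow> pl a1 a2 b1 b2 1 = 1"
  by (auto simp: pl_def okp_def)

lemma pl_range:
  assumes "okp a1 a2 b1 b2" "x \<in> {-1..1}"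
  shows "pl a1 a2 b1 b2 x \<in> {-1..1}"
  using pl_strict[OF assms(1), of "-1" x] pl_strict[OF assms(1), of x 1] assms
  by (cases "x = -1"; cases "x = 1") auto

lemma pl_G:
  assumes "okp a1 a2 b1 b2"
  shows "pl a1 a2 b1 b2 \<in> G"
  unfolding G_def using pl_cont[OF assms] pl_range[OF assms] pl_strict[OF assms] assms
  by (auto intro!: strict_mono_onI)

lemma pl_inv:
  assumes "okp a1 a2 b1 b2"
  shows "pl a1 a2 b1 b2 (pl b1 b2 a1 a2 t) = t"
proof -
  have o: "-1 < a1" "a1 < a2" "a2 < 1" "-1 < b1" "b1 < b2" "b2 < 1" using assms by (auto simp: okp_def)
  show ?thesis
  proof (cases "t \<le> b1")
    case True
    have "lin (-1) (-1) b1 a1 t \<le> a1" using lin_mono[OF o(4) o(1) True] o by simp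
    then show ?thesis using True lin_inv[OF o(4) o(1)] by (simp add: pl_def)
  next
    case t1: False
    show ?thesis
    proof (cases "t \<le> b2")
      case True
      have "lin b1 a1 b2 a2 t \<le> a2" using lin_mono[OF o(5) o(2) True] o by simp
      moreover have "a1 < lin b1 a1 b2 a2 t" using lin_strict[OF o(5) o(2), of b1 t] t1 o by simp
      ultimately show ?thesis using True t1 lin_inv[OF o(5) o(2)] by (simp add: pl_def)
    next
      case t2: False
      have "a2 < lin b2 a2 1 1 t" using lin_strict[OF o(6) o(3), of b2 t] t2 o by simp
      then show ?thesis using t1 t2 o lin_inv[OF o(6) o(3)] by (simp add: pl_def)
    qed
  qed
qed

lemma has_integral_combine3:
  fixes f :: "real \<Rightarrow> real"
  assumes "a \<le> c" "c \<le> d" "d \<le> b"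
    and "(f has_integral i) {a..c}" "(f has_integral j) {c..d}" "(f has_integral k) {d..b}"
  shows "(f has_integral (i + j + k)) {a..b}"
  using assms by (meson has_integral_combine order_trans)

lemma pl_has_integral:
  assumes "okp a1 a2 b1 b2"
  shows "(pl a1 a2 b1 b2 has_integral
     ((a1 + 1) * (-1 + b1) / 2 + (a2 - a1) * (b1 + b2) / 2 + (1 - a2) * (b2 + 1) / 2)) {-1..1}"
proof -
  have o: "-1 < a1" "a1 < a2" "a2 < 1" "-1 < b1" "b1 < b2" "b2 < 1" using assms by (auto simp: okp_def)
  have i1: "(pl a1 a2 b1 b2 has_integral (a1 + 1) * (-1 + b1) / 2) {-1..a1}"
    by (rule has_integral_eq_rhs, rule has_integral_eq[OF _ lin_has_integral[OF o(1), of "-1" b1]])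
      (auto simp: pl_def)
  have i2: "(pl a1 a2 b1 b2 has_integral (a2 - a1) * (b1 + b2) / 2) {a1..a2}"
    by (rule has_integral_eq_rhs, rule has_integral_eq[OF _ lin_has_integral[OF o(2), of b1 b2]])
      (use o in \<open>auto simp: pl_def lin_def\<close>)
  have i3: "(pl a1 a2 b1 b2 has_integral (1 - a2) * (b2 + 1) / 2) {a2..1}"
    by (rule has_integral_eq_rhs, rule has_integral_eq[OF _ lin_has_integral[OF o(3), of b2 1]])
      (use o in \<open>auto simp: pl_def lin_def\<close>)
  show ?thesis using has_integral_combine3[OF _ _ _ i1 i2 i3] o by simp
qed

lemma pl_comp_has_integral:
  assumes "okp a1 a2 b1 b2" and f: "continuous_on {-1..1} f"
  shows "((\<lambda>t. f (pl b1 b2 a1 a2 t)) has_integral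
     ((b1 + 1) / (a1 + 1)) * (FF f a1 - FF f (-1)) + ((b2 - b1) / (a2 - a1)) * (FF f a2 - FF f a1)
     + ((1 - b2) / (1 - a2)) * (FF f 1 - FF f a2)) {-1..1}"
proof -
  have o: "-1 < a1" "a1 < a2" "a2 < 1" "-1 < b1" "b1 < b2" "b2 < 1" using assms by (auto simp: okp_def)
  have i1: "((\<lambda>t. f (pl b1 b2 a1 a2 t)) has_integral ((b1 + 1) / (a1 + 1)) * (FF f a1 - FF f (-1))) {-1..b1}"
    using o
    by (intro has_integral_eq_rhs[OF has_integral_eq[OF _ lin_comp_has_integral[OF f o(4) o(1)]]]) (auto simp: pl_def)
  have i2: "((\<lambda>t. f (pl b1 b2 a1 a2 t)) has_integral ((b2 - b1) / (a2 - a1)) * (FF f a2 - FF f a1)) {b1..b2}"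
    using o
    by (intro has_integral_eq_rhs[OF has_integral_eq[OF _ lin_comp_has_integral[OF f o(5) o(2)]]]) (auto simp: pl_def)
  have i3: "((\<lambda>t. f (pl b1 b2 a1 a2 t)) has_integral ((1 - b2) / (1 - a2)) * (FF f 1 - FF f a2)) {b2..1}"
    using o
    by (intro has_integral_eq_rhs[OF has_integral_eq[OF _ lin_comp_has_integral[OF f o(6) o(3)]]]) (auto simp: pl_def)
  show ?thesis using has_integral_combine3[OF _ _ _ i1 i2 i3] o by simp
qed

lemma pl_odd:
  assumes "okp a1 a2 b1 b2" "a1 = - a2" "b1 = - b2"
  shows "pl a1 a2 b1 b2 (-x) = - pl a1 a2 b1 b2 x"
  using assms by (cases "x = - a2") (auto simp: pl_def okp_def lin_def field_simps)


definition Dv :: "(real \<Rightarrow> real) \<Rightarrow> real \<Rightarrow> real \<Rightarrow> real" where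
  "Dv f p q = FF f p * (1 + q) / (1 + p) - FF f q * (1 - p) / (1 - q)"

lemma G0_cont: "f \<in> G0 \<Longrightarrow> continuous_on {-1..1} f" by (simp add: G0_def G_def)
lemma G0_FF1: "f \<in> G0 \<Longrightarrow> FF f 1 = 0" by (simp add: G0_def FF_def)
lemma FF_m1[simp]: "FF f (-1) = 0" by (simp add: FF_def)

lemma constr_alg:
  fixes p q e A B :: real
  assumes "1 + p \<noteq> 0" "q - p \<noteq> 0" "1 - q \<noteq> 0"
  shows "((p + e*(1-p) + 1)/(p+1))*(A - 0) + ((q - e*(1+q) - (p + e*(1-p)))/(q-p))*(B - A)
     + ((1 - (q - e*(1+q)))/(1-q))*(0 - B) = (2/(q-p))*(e*(A*(1+q)/(1+p) - B*(1-p)/(1-q)))"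
proof -
  have n: "p + 1 \<noteq> 0" using assms by argo
  define a where "a = (1-p)/(1+p)"
  define b where "b = (2+q-p)/(q-p)"
  define c where "c = (1+q)/(1-q)"
  have t1: "(p + e*(1-p) + 1)/(p+1) = 1 + e * a" using assms n by (simp add: a_def field_simps)
  have t2: "(q - e*(1+q) - (p + e*(1-p)))/(q-p) = 1 - e * b" using assms by (simp add: b_def field_simps)
  have t3: "(1 - (q - e*(1+q)))/(1-q) = 1 + e * c" using assms by (simp add: c_def field_simps)
  have s1: "a + b = 2 * (1+q) / ((1+p) * (q-p))" using assms n
    by (simp add: a_def b_def field_simps)
  have s2: "b + c = 2 * (1-p) / ((q-p) * (1-q))" using assms n
    by (simp add: c_def b_def field_simps)
  have "(1 + e * a) * (A - 0) + (1 - e * b) * (B - A) + (1 + e * c) * (0 - B)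
      = e * (A * (a + b) - B * (b + c))" by (simp add: algebra_simps)
  also have "\<dots> = (2/(q-p))*(e*(A*(1+q)/(1+p) - B*(1-p)/(1-q)))"
    unfolding s1 s2 by (simp add: divide_simps mult_ac) (simp add: algebra_simps)
  finally show ?thesis unfolding t1 t2 t3 .
qed

lemma constr:
  assumes f: "f \<in> G0" and pq: "-1 < p" "p < q" "q < 1"
    and eps: "\<bar>\<epsilon>\<bar> \<le> min (1 + p) (min (1 - q) (q - p)) / 8"
  defines "g \<equiv> pl p q (p + \<epsilon> * (1 - p)) (q - \<epsilon> * (1 + q))"
  shows "g \<in> G0" "Q f g = (2 / (q - p)) * (\<epsilon> * Dv f p q)"
    "okp p q (p + \<epsilon> * (1 - p)) (q - \<epsilon> * (1 + q))"
proof -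
  define P where "P = p + \<epsilon> * (1 - p)"
  define R where "R = q - \<epsilon> * (1 + q)"
  have e1: "\<bar>\<epsilon>\<bar> * 8 \<le> 1 + p" "\<bar>\<epsilon>\<bar> * 8 \<le> 1 - q" "\<bar>\<epsilon>\<bar> * 8 \<le> q - p" using eps by auto
  have b1: "\<bar>\<epsilon> * (1 - p)\<bar> \<le> \<bar>\<epsilon>\<bar> * 2" using pq by (simp add: abs_mult mult_left_mono)
  have b2: "\<bar>\<epsilon> * (1 + q)\<bar> \<le> \<bar>\<epsilon>\<bar> * 2" using pq by (simp add: abs_mult mult_left_mono)
  have b3: "\<bar>\<epsilon> * (2 + q - p)\<bar> \<le> \<bar>\<epsilon>\<bar> * 4" using pq by (simp add: abs_mult mult_left_mono)
  have "R - P = (q - p) - \<epsilon> * (2 + q - p)" by (simp add: P_def R_def algebra_simps)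
  then have ok: "okp p q P R" unfolding okp_def P_def R_def using pq e1 b1 b2 b3
    by (auto simp: abs_le_iff)
  show "okp p q (p + \<epsilon> * (1 - p)) (q - \<epsilon> * (1 + q))" using ok by (simp add: P_def R_def)
  have gdef: "g = pl p q P R" by (simp add: g_def P_def R_def)
  have gG: "g \<in> G" using pl_G[OF ok] gdef by simp
  have "integral {-1..1} g = (p + 1) * (-1 + P) / 2 + (q - p) * (P + R) / 2 + (1 - q) * (R + 1) / 2"
    using pl_has_integral[OF ok] gdef by (simp add: integral_unique)
  also have "\<dots> = 0" by (simp add: P_def R_def field_simps)
  finally show "g \<in> G0" using gG by (simp add: G0_def)
  have inj: "inj_on g {-1..1}" using gG by (auto simp: G_def intro: strict_mono_on_imp_inj_on)
  have inv: "inv_into {-1..1} g t = pl P R p q t" if t: "t \<in> {-1..1}" for t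
    using inj pl_range[OF okp_swap[OF ok] t] pl_inv[OF ok] gdef by (auto intro: inv_into_f_eq)
  have "Q f g = integral {-1..1} (\<lambda>t. f (pl P R p q t))"
    unfolding Q_def by (rule integral_cong) (simp add: inv)
  also have "\<dots> = ((P + 1) / (p + 1)) * (FF f p - FF f (-1)) + ((R - P) / (q - p)) * (FF f q - FF f p)
     + ((1 - R) / (1 - q)) * (FF f 1 - FF f q)"
    using pl_comp_has_integral[OF ok G0_cont[OF f]] by (simp add: integral_unique)
  also have "\<dots> = (2 / (q - p)) * (\<epsilon> * Dv f p q)"
    using pq G0_FF1[OF f] constr_alg[of p q \<epsilon> "FF f p" "FF f q"] by (simp add: P_def R_def Dv_def)
  finally show "Q f g = (2 / (q - p)) * (\<epsilon> * Dv f p q)" .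
qed


lemma deriv_uniq:
  fixes F :: "real \<Rightarrow> real"
  assumes "a < b" "x \<in> {a..b}"
    "(F has_real_derivative d1) (at x within {a..b})"
    "(F has_real_derivative d2) (at x within {a..b})"
  shows "d1 = d2"
  using vector_derivative_unique_within_closed_interval[of a b x F d1 d2] assms
  by (simp add: cbox_interval has_real_derivative_iff_has_vector_derivative)

lemma FF_deriv:
  assumes "f \<in> G0" "x \<in> {-1..1}"
  shows "(FF f has_real_derivative f x) (at x within {-1..1})"
  unfolding FF_def[abs_def] by (rule integral_has_real_derivative[OF G0_cont[OF assms(1)] assms(2)])

lemma nonconst1:
  assumes f: "f \<in> G0" and nid: "\<not> is_id f"
  shows "\<exists>p q. -1 < p \<and> p < q \<and> q < 1 \<and> Dv f p q \<noteq> 0"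
proof (rule ccontr)
  assume "\<not> ?thesis"
  then have D0: "\<And>p q. -1 < p \<Longrightarrow> p < q \<Longrightarrow> q < 1 \<Longrightarrow> Dv f p q = 0" by blast
  define \<kappa> where "\<kappa> = FF f 0"
  have Fx: "FF f x = \<kappa> * (1 - x * x)" if x: "x \<in> {-1..1}" for x
  proof -
    consider "x = -1" | "x = 1" | "x = 0" | "-1 < x" "x < 0" | "0 < x" "x < 1" using x by force
    then show ?thesis
    proof cases
      case 1 then show ?thesis by simp
    next
      case 2 then show ?thesis using G0_FF1[OF f] by simp
    next
      case 3 then show ?thesis by (simp add: \<kappa>_def)
    next
      case 4
      have "Dv f x 0 = 0" using D0 4 by simp
      then have "FF f x / (1 + x) = \<kappa> * (1 - x)" by (simp add: Dv_def \<kappa>_def)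
      then show ?thesis using 4 by (simp add: field_simps)
    next
      case 5
      have "Dv f 0 x = 0" using D0 5 by simp
      then have "\<kappa> * (1 + x) = FF f x / (1 - x)" by (simp add: Dv_def \<kappa>_def)
      then show ?thesis using 5 by (simp add: field_simps)
    qed
  qed
  have fx: "f x = -2 * \<kappa> * x" if x: "x \<in> {-1..1}" for x
  proof -
    have d1: "(FF f has_real_derivative f x) (at x within {-1..1})" by (rule FF_deriv[OF f x])
    have "((\<lambda>x. \<kappa> * (1 - x * x)) has_real_derivative -2 * \<kappa> * x) (at x within {-1..1})"
      by (auto intro!: derivative_eq_intros simp: algebra_simps)
    then have d2: "(FF f has_real_derivative -2 * \<kappa> * x) (at x within {-1..1})"
      by (rule has_field_derivative_transform_within[OF _ zero_less_one x]) (simp add: Fx)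
    show ?thesis using deriv_uniq[OF _ x d1 d2] by simp
  qed
  have "f 1 = 1" using f by (simp add: G0_def G_def)
  then have "-2 * \<kappa> = 1" using fx[of 1] by simp
  then have "is_id f" using fx by (simp add: is_id_def)
  then show False using nid by simp
qed

lemma nonconst2:
  assumes f: "f \<in> G0" and nodd: "f \<notin> G00"
  shows "\<exists>q. 0 < q \<and> q < 1 \<and> FF f q \<noteq> FF f (-q)"
proof (rule ccontr)
  assume "\<not> ?thesis"
  then have E0: "\<And>q. 0 < q \<Longrightarrow> q < 1 \<Longrightarrow> FF f q = FF f (-q)" by blast
  have Ex: "FF f x - FF f (-x) = 0" if x: "x \<in> {0..1}" for x
    using x E0[of x] G0_FF1[OF f] by (cases "x = 0"; cases "x = 1") auto
  have fx: "f x + f (-x) = 0" if x: "x \<in> {0..1}" for x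
  proof -
    have sub: "{0..1} \<subseteq> {-1..(1::real)}" by auto
    have a1: "(FF f has_real_derivative f x) (at x within {0..1})"
      using FF_deriv[OF f, of x] x sub by (auto intro: DERIV_subset)
    have "(FF f has_real_derivative f (-x)) (at (-x) within {-1..1})"
      using FF_deriv[OF f, of "-x"] x by auto
    then have "(FF f has_real_derivative f (-x)) (at (uminus x) within uminus ` {0..1})"
      by (rule DERIV_subset) auto
    from DERIV_image_chain[OF this DERIV_minus[OF DERIV_ident]]
    have a2: "((\<lambda>x. FF f (-x)) has_real_derivative f (-x) * -1) (at x within {0..1})"
      by (simp add: o_def)
    have d1: "((\<lambda>x. FF f x - FF f (-x)) has_real_derivative f x + f (-x)) (at x within {0..1})"
      using DERIV_diff[OF a1 a2] by simp
    have d2: "((\<lambda>x. FF f x - FF f (-x)) has_real_derivative 0) (at x within {0..1})"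
      by (rule has_field_derivative_transform_within[OF DERIV_const zero_less_one x]) (simp add: Ex)
    show ?thesis using deriv_uniq[OF _ x d1 d2] by simp
  qed
  have "\<forall>t\<in>{-1..1}. f (-t) = - f t"
  proof
    fix t :: real assume t: "t \<in> {-1..1}"
    show "f (-t) = - f t"
    proof (cases "t \<ge> 0")
      case True then show ?thesis using fx[of t] t by auto
    next
      case False then show ?thesis using fx[of "-t"] t by auto
    qed
  qed
  then have "f \<in> G00" using f by (simp add: G00_def G0_def)
  then show False using nodd by simp
qed


lemma signs:
  fixes D e :: real
  assumes "D \<noteq> 0" "e > 0"
  shows "\<exists>\<epsilon>1 \<epsilon>2. \<bar>\<epsilon>1\<bar> \<le> e \<and> \<bar>\<epsilon>2\<bar> \<le> e \<and> \<epsilon>1 * D > 0 \<and> \<epsilon>2 * D < 0"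
proof (cases "D > 0")
  case True
  then show ?thesis using assms by (intro exI[of _ e] exI[of _ "-e"]) (auto simp: mult_neg_pos)
next
  case False
  then have "D < 0" using assms by simp
  then show ?thesis using assms by (intro exI[of _ "-e"] exI[of _ e]) (auto simp: mult_neg_neg mult_pos_neg)
qed

lemma main_gen:
  assumes f: "f \<in> G0" and pq: "-1 < p" "p < q" "q < 1" and D: "Dv f p q \<noteq> 0"
  shows "\<exists>\<epsilon>1 \<epsilon>2. pl p q (p + \<epsilon>1 * (1 - p)) (q - \<epsilon>1 * (1 + q)) \<in> G0
     \<and> pl p q (p + \<epsilon>2 * (1 - p)) (q - \<epsilon>2 * (1 + q)) \<in> G0
     \<and> okp p q (p + \<epsilon>1 * (1 - p)) (q - \<epsilon>1 * (1 + q))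
     \<and> okp p q (p + \<epsilon>2 * (1 - p)) (q - \<epsilon>2 * (1 + q))
     \<and> Q f (pl p q (p + \<epsilon>1 * (1 - p)) (q - \<epsilon>1 * (1 + q))) > 0
     \<and> Q f (pl p q (p + \<epsilon>2 * (1 - p)) (q - \<epsilon>2 * (1 + q))) < 0"
proof -
  define e where "e = min (1 + p) (min (1 - q) (q - p)) / 8"
  have "e > 0" using pq by (simp add: e_def)
  then obtain \<epsilon>1 \<epsilon>2 where s: "\<bar>\<epsilon>1\<bar> \<le> e" "\<bar>\<epsilon>2\<bar> \<le> e" "\<epsilon>1 * Dv f p q > 0" "\<epsilon>2 * Dv f p q < 0"
    using signs[OF D] by blast
  have c: "2 / (q - p) > 0" using pq by simp
  note c1 = constr[OF f pq s(1)[unfolded e_def]] and c2 = constr[OF f pq s(2)[unfolded e_def]]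
  show ?thesis
    apply (rule exI[of _ \<epsilon>1], rule exI[of _ \<epsilon>2])
    using c1 c2 s(3,4) c mult_pos_neg[OF c s(4)] mult_pos_pos[OF c s(3)] by simp
qed

theorem theorem4p2:
  fixes f :: "real \<Rightarrow> real"
  assumes "f \<in> G0" and "\<not> is_id f"
  shows "(\<exists>g1\<in>G0. \<exists>g2\<in>G0. Q f g1 > 0 \<and> 0 > Q f g2)
       \<and> (f \<notin> G00 \<longrightarrow> (\<exists>g1\<in>G00. \<exists>g2\<in>G00. Q f g1 > 0 \<and> 0 > Q f g2))"
proof (intro conjI impI)
  obtain p q where pq: "-1 < p" "p < q" "q < 1" "Dv f p q \<noteq> 0" using nonconst1[OF assms] by blast
  show "\<exists>g1\<in>G0. \<exists>g2\<in>G0. Q f g1 > 0 \<and> 0 > Q f g2"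
    using main_gen[OF assms(1) pq] by blast
next
  assume "f \<notin> G00"
  then obtain q where q: "0 < q" "q < 1" "FF f q \<noteq> FF f (-q)" using nonconst2[OF assms(1)] by blast
  have "Dv f (-q) q = (FF f (-q) - FF f q) * ((1 + q) / (1 - q))"
    by (simp add: Dv_def algebra_simps)
  moreover have "(1 + q) / (1 - q) \<noteq> 0" using q by simp
  ultimately have D: "Dv f (-q) q \<noteq> 0" using q by simp
  have pq: "-1 < -q" "-q < q" "q < 1" using q by auto
  obtain \<epsilon>1 \<epsilon>2 where E:
    "pl (-q) q (-q + \<epsilon>1 * (1 - -q)) (q - \<epsilon>1 * (1 + q)) \<in> G0"
    "pl (-q) q (-q + \<epsilon>2 * (1 - -q)) (q - \<epsilon>2 * (1 + q)) \<in> G0"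
    "okp (-q) q (-q + \<epsilon>1 * (1 - -q)) (q - \<epsilon>1 * (1 + q))"
    "okp (-q) q (-q + \<epsilon>2 * (1 - -q)) (q - \<epsilon>2 * (1 + q))"
    "Q f (pl (-q) q (-q + \<epsilon>1 * (1 - -q)) (q - \<epsilon>1 * (1 + q))) > 0"
    "Q f (pl (-q) q (-q + \<epsilon>2 * (1 - -q)) (q - \<epsilon>2 * (1 + q))) < 0"
    using main_gen[OF assms(1) pq D] by blast
  have odd: "pl (-q) q (-q + \<epsilon> * (1 - -q)) (q - \<epsilon> * (1 + q)) \<in> G00"
    if "pl (-q) q (-q + \<epsilon> * (1 - -q)) (q - \<epsilon> * (1 + q)) \<in> G0"
       "okp (-q) q (-q + \<epsilon> * (1 - -q)) (q - \<epsilon> * (1 + q))" for \<epsilon>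
    using that pl_odd[OF that(2)] by (simp add: G00_def G0_def algebra_simps)
  show "\<exists>g1\<in>G00. \<exists>g2\<in>G00. Q f g1 > 0 \<and> 0 > Q f g2"
    using odd[OF E(1) E(3)] odd[OF E(2) E(4)] E(5,6) by blast
qed

end
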